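(* Let $n,d\ge1$ and $\epsilon_i>0$. Consider datasets of voter $i$ of the form $D_i=\{\langle X_1,Z_1\rangle,\dots,\langle X_n,Z_n\rangle\}$ with $X_j,Z_j\in\mathbb{R}^d$, $\|X_j\|_2\le 1/2$, $\|Z_j\|_2\le 1/2$, and set $V_j=X_j-Z_j$. Define the approximate objective $$\hat f_{D_i}(\boldsymbol\beta)=\sum_{j=1}^n\sum_{k=0}^{2}\frac{f_1^{(k)}(0)}{k!}(\boldsymbol\beta^\top V_j)^k=\sum_{j=1}^n\Big(\ln\tfrac12+\sqrt{2/\pi}\,\boldsymbol\beta^\top V_j-\tfrac1\pi(\boldsymbol\beta^\top V_j)^2\Big),$$ where $f_1(z)=\ln\Phi(z)$ and $\Phi$ is the standard normal CDF. Write $\hat f_{D_i}(\boldsymbol\beta)=\sum_{w=0}^{2}\sum_{\phi\in\Psi_w}\big(\sum_{j=1}^n\lambda_{\phi,V_j}\big)\phi(\boldsymbol\beta)$, where $\Psi_w$ is the set of monomials $\beta[1]^{c_1}\cdots\beta[d]^{c_d}$ with $c_1+\dots+c_d=w$ and $\lambda_{\phi,V_j}$ is the coefficient of $\phi$ in the $j$-th summand. Let $\Delta_{\mathrm{upper}}=2\sqrt{2d/\pi}+2d/\pi$. Consider the randomized algorithm (Algorithm 3) which, for each $w\in\{0,1,2\}$ and each $\phi\in\Psi_w$, computes $\lambda_\phi=\sum_{j=1}^n\lambda_{\phi,V_j}+\eta_\phi$ with the $\eta_\phi$ independent zero-mean Laplace variables of scale $\Delta_{\mathrm{upper}}/\epsilon_i$,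 forms $f^*_{D_i}(\boldsymbol\beta)=\sum_{w=0}^2\sum_{\phi\in\Psi_w}\lambda_\phi\,\phi(\boldsymbol\beta)$, and outputs $\boldsymbol\beta_i^*\in\operatorname*{argmax}_{\boldsymbol\beta}f^*_{D_i}(\boldsymbol\beta)$ (computed from the noisy coefficients alone). Then this algorithm satisfies $\epsilon_i$-differential privacy in the record-level distributed sense (RLDP): for any two such datasets $D_i,D_i'$ of $n$ records differing in exactly one record and any measurable set $\mathcal{Y}$ of outputs, $\Pr[\boldsymbol\beta_i^*(D_i)\in\mathcal{Y}]\le e^{\epsilon_i}\Pr[\boldsymbol\beta_i^*(D_i')\in\mathcal{Y}]$.
   Context: The Laplace distribution with scale $\lambda$ has density $\frac{1}{2\lambda}e^{-|x|/\lambda}$. $\beta[k]$ denotes the $k$-th coordinate of $\boldsymbol\beta\in\mathbb{R}^d$. *)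

theory Defs
  imports "HOL-Probability.Probability"
begin

definition laplace_density :: "real \<Rightarrow> real \<Rightarrow> real" where
  "laplace_density b x = exp (- \<bar>x\<bar> / b) / (2 * b)"

definition laplace_measure :: "real \<Rightarrow> real measure" where
  "laplace_measure b = density lborel (\<lambda>x. ennreal (laplace_density b x))"

text \<open>Monomials of total degree w in beta[1..d]: exponent vectors c with sum of c = w.\<close>
definition Psi :: "nat \<Rightarrow> ('d::finite \<Rightarrow> nat) set" where
  "Psi w = {c. (\<Sum>k\<in>UNIV. c k) = w}"

definition Psi_all :: "('d::finite \<Rightarrow> nat) set" where
  "Psi_all = Psi 0 \<union> Psi 1 \<union> Psi 2"

definition monomial_eval :: "('d::finite \<Rightarrow> nat) \<Rightarrow> real^'d \<Rightarrow> real" where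
  "monomial_eval c \<beta> = (\<Prod>k\<in>UNIV. (\<beta> $ k) ^ c k)"

text \<open>Taylor coefficients of f1(z) = ln Phi(z) at 0 divided by k!:
  ln(1/2), sqrt(2/pi), -1/pi.\<close>
definition taylor_coeff :: "nat \<Rightarrow> real" where
  "taylor_coeff w = (if w = 0 then ln (1/2) else if w = 1 then sqrt (2/pi)
                     else if w = 2 then - 1/pi else 0)"

text \<open>lambda_{phi,V}: coefficient of monomial phi = beta^c in
  ln(1/2) + sqrt(2/pi) (beta.V) - (1/pi) (beta.V)^2, via the multinomial theorem.\<close>
definition coef :: "real^'d \<Rightarrow> ('d::finite \<Rightarrow> nat) \<Rightarrow> real" where
  "coef V c = (let w = (\<Sum>k\<in>UNIV. c k) in
      taylor_coeff w * (fact w / (\<Prod>k\<in>UNIV. fact (c k))) * (\<Prod>k\<in>UNIV. (V $ k) ^ c k))"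

definition noisy_objective :: "(('d::finite \<Rightarrow> nat) \<Rightarrow> real) \<Rightarrow> real^'d \<Rightarrow> real" where
  "noisy_objective lam \<beta> = (\<Sum>c\<in>Psi_all. lam c * monomial_eval c \<beta>)"

definition Delta_upper :: "nat \<Rightarrow> real" where
  "Delta_upper d = 2 * sqrt (2 * real d / pi) + 2 * real d / pi"

text \<open>Output distribution of Algorithm 3 on dataset D (records D j = (X_j, Z_j), j < n),
  with selection rule sel mapping noisy coefficients to a maximiser.\<close>
definition algorithm3 ::
  "real \<Rightarrow> nat \<Rightarrow> (nat \<Rightarrow> (real^'d) \<times> (real^'d)) \<Rightarrow>
   ((('d::finite \<Rightarrow> nat) \<Rightarrow> real) \<Rightarrow> real^'d) \<Rightarrow> (real^'d) measure" where
  "algorithm3 eps n D sel =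
     distr (PiM Psi_all (\<lambda>_. laplace_measure (Delta_upper CARD('d) / eps))) borel
       (\<lambda>\<eta>. sel (\<lambda>c\<in>Psi_all. (\<Sum>j<n. coef (fst (D j) - snd (D j)) c) + \<eta> c))"

end

theory Submission
  imports Defs
begin


lemma lap_meas[measurable]: "(\<lambda>x. laplace_density b (x - t)) \<in> borel_measurable borel"
  unfolding laplace_density_def by measurable

lemma lap_nonneg: "b > 0 \<Longrightarrow> laplace_density b x \<ge> 0"
  unfolding laplace_density_def by simp

lemma lap_integral:
  assumes b: "b > 0"
  shows "(\<integral>\<^sup>+x. ennreal (laplace_density b x) \<partial>lborel) = 1"
proof -
  let ?e = "exponential_density (1/b)"
  have e1: "(\<integral>\<^sup>+x. ennreal (?e x) \<partial>lborel) = 1"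
  proof -
    interpret prob_space "density lborel ?e" using prob_space_exponential_density[of "1/b"] b by simp
    have "emeasure (density lborel ?e) UNIV = 1" using emeasure_space_1 by simp
    then show ?thesis by (simp add: emeasure_density)
  qed
  have e2: "(\<integral>\<^sup>+x. ennreal (?e (-x)) \<partial>lborel) = 1"
    using nn_integral_real_affine[of "\<lambda>x. ennreal (?e x)" "-1" 0] e1 by simp
  have "(\<integral>\<^sup>+x. ennreal (laplace_density b x) \<partial>lborel)
      = (\<integral>\<^sup>+x. ennreal (1/2) * ennreal (?e x) + ennreal (1/2) * ennreal (?e (-x)) \<partial>lborel)"
  proof (rule nn_integral_cong_AE)
    show "AE x in lborel. ennreal (laplace_density b x) = ennreal (1/2) * ennreal (?e x) + ennreal (1/2) * ennreal (?e (-x))"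
      using AE_lborel_singleton[of "0::real"]
    proof eventually_elim
      case (elim x)
      have "laplace_density b x = 1/2 * ?e x + 1/2 * ?e (-x)"
        using elim b by (auto simp: laplace_density_def exponential_density_def field_simps abs_if)
      moreover have "?e x \<ge> 0" "?e (-x) \<ge> 0" using b by (auto simp: exponential_density_def)
      ultimately show ?case
        using ennreal_plus[of "1/2 * ?e x" "1/2 * ?e (-x)"] ennreal_mult[of "1/2" "?e x"] ennreal_mult[of "1/2" "?e (-x)"]
        by simp
    qed
  qed
  also have "\<dots> = ennreal (1/2) * (\<integral>\<^sup>+x. ennreal (?e x) \<partial>lborel) + ennreal (1/2) * (\<integral>\<^sup>+x. ennreal (?e (-x)) \<partial>lborel)"
    by (simp add: nn_integral_add nn_integral_cmult)
  also have "\<dots> = ennreal (1/2) + ennreal (1/2)" using e1 e2 by simp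
  also have "\<dots> = 1" using ennreal_plus[of "1/2" "1/2"] by simp
  finally show ?thesis .
qed


definition shifted :: "real \<Rightarrow> real \<Rightarrow> real measure" where
  "shifted b t = density lborel (\<lambda>y. ennreal (laplace_density b (y - t)))"

lemma sets_shifted[simp, measurable_cong]: "sets (shifted b t) = sets borel"
  by (simp add: shifted_def)

lemma space_shifted[simp]: "space (shifted b t) = UNIV"
  by (simp add: shifted_def)

lemma sets_laplace[simp, measurable_cong]: "sets (laplace_measure b) = sets borel"
  by (simp add: laplace_measure_def)

lemma space_laplace[simp]: "space (laplace_measure b) = UNIV"
  by (simp add: laplace_measure_def)

lemma shift_emeasure:
  assumes A[measurable]: "A \<in> sets borel"
  shows "emeasure (laplace_measure b) ((\<lambda>x. t + x) -` A) = emeasure (shifted b t) A"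
proof -
  have mf: "(\<lambda>x::real. t + x) \<in> borel_measurable borel" by simp
  have m: "(\<lambda>x. t + x) -` A \<in> sets borel" using measurable_sets[OF mf A] by simp
  have "emeasure (shifted b t) A = (\<integral>\<^sup>+y. ennreal (laplace_density b (y - t)) * indicator A y \<partial>lborel)"
    unfolding shifted_def by (subst emeasure_density) auto
  also have "\<dots> = (\<integral>\<^sup>+x. ennreal (laplace_density b (t + 1 * x - t)) * indicator A (t + 1 * x) \<partial>lborel)"
    by (subst nn_integral_real_affine[of _ 1 t]) auto
  also have "\<dots> = (\<integral>\<^sup>+x. ennreal (laplace_density b x) * indicator ((\<lambda>x. t + x) -` A) x \<partial>lborel)"
    by (intro nn_integral_cong) (auto split: split_indicator)
  also have "\<dots> = emeasure (laplace_measure b) ((\<lambda>x. t + x) -` A)"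
    unfolding laplace_measure_def using m
    by (subst emeasure_density) (auto simp: laplace_density_def)
  finally show ?thesis by simp
qed

lemma prob_laplace: "b > 0 \<Longrightarrow> prob_space (laplace_measure b)"
  unfolding laplace_measure_def
  apply (rule prob_spaceI)
  apply (subst emeasure_density)
  apply (auto simp: laplace_density_def)[2]
  using lap_integral[of b] by (simp add: laplace_density_def)

lemma prob_shifted: "b > 0 \<Longrightarrow> prob_space (shifted b t)"
proof (rule prob_spaceI)
  assume b: "b > 0"
  have "emeasure (shifted b t) UNIV = emeasure (laplace_measure b) ((\<lambda>x. t + x) -` UNIV)"
    by (rule shift_emeasure[symmetric]) simp
  also have "\<dots> = 1" using prob_space.emeasure_space_1[OF prob_laplace[OF b]] by simp
  finally show "emeasure (shifted b t) (space (shifted b t)) = 1" by simp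
qed


lemma distr_shift_PiM:
  fixes I :: "'i set" and a :: "'i \<Rightarrow> real"
  assumes I: "finite I" and b: "b > 0"
  shows "distr (PiM I (\<lambda>_. laplace_measure b)) (PiM I (\<lambda>_. borel)) (\<lambda>\<eta>. \<lambda>c\<in>I. a c + \<eta> c)
       = PiM I (\<lambda>c. shifted b (a c))"
proof -
  interpret S: product_prob_space "\<lambda>c. shifted b (a c)"
    by (rule product_prob_spaceI) (rule prob_shifted[OF b])
  interpret L: product_prob_space "\<lambda>_. laplace_measure b"
    by (rule product_prob_spaceI) (rule prob_laplace[OF b])
  have meas: "(\<lambda>\<eta>. \<lambda>c\<in>I. a c + \<eta> c) \<in> measurable (PiM I (\<lambda>_. laplace_measure b)) (PiM I (\<lambda>_. borel))"
  proof (rule measurable_restrict)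
    fix c assume "c \<in> I"
    then have "(\<lambda>\<eta>. \<eta> c) \<in> measurable (PiM I (\<lambda>_. laplace_measure b)) (laplace_measure b)"
      by (rule measurable_component_singleton)
    then have "(\<lambda>\<eta>. \<eta> c) \<in> borel_measurable (PiM I (\<lambda>_. laplace_measure b))"
      using \<open>c \<in> I\<close> unfolding laplace_measure_def by measurable
    then show "(\<lambda>\<eta>. a c + \<eta> c) \<in> borel_measurable (PiM I (\<lambda>_. laplace_measure b))"
      by (intro borel_measurable_add) auto
  qed
  show ?thesis
  proof (rule S.PiM_eqI[OF I])
    show "sets (distr (PiM I (\<lambda>_. laplace_measure b)) (PiM I (\<lambda>_. borel)) (\<lambda>\<eta>. \<lambda>c\<in>I. a c + \<eta> c))
       = sets (PiM I (\<lambda>c. shifted b (a c)))"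
      unfolding sets_distr by (intro sets_PiM_cong) auto
    fix A assume A: "\<And>i. i \<in> I \<Longrightarrow> A i \<in> sets (shifted b (a i))"
    have pre: "(\<lambda>\<eta>. \<lambda>c\<in>I. a c + \<eta> c) -` PiE I A \<inter> space (PiM I (\<lambda>_. laplace_measure b))
        = PiE I (\<lambda>c. (\<lambda>x. a c + x) -` A c)"
      unfolding space_PiM space_laplace by (auto simp: PiE_iff)
    have AS: "PiE I A \<in> sets (PiM I (\<lambda>_. borel))"
      using A by (intro sets_PiM_I_finite[OF I]) auto
    have "emeasure (distr (PiM I (\<lambda>_. laplace_measure b)) (PiM I (\<lambda>_. borel)) (\<lambda>\<eta>. \<lambda>c\<in>I. a c + \<eta> c)) (PiE I A)
       = emeasure (PiM I (\<lambda>_. laplace_measure b)) (PiE I (\<lambda>c. (\<lambda>x. a c + x) -` A c))"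
      using emeasure_distr[OF meas AS] pre by simp
    also have "\<dots> = (\<Prod>c\<in>I. emeasure (laplace_measure b) ((\<lambda>x. a c + x) -` A c))"
    proof (rule L.emeasure_PiM[OF I])
      fix c assume c: "c \<in> I"
      have mf: "(\<lambda>x::real. a c + x) \<in> borel_measurable borel" by simp
      show "(\<lambda>x. a c + x) -` A c \<in> sets (laplace_measure b)"
        using measurable_sets[OF mf, of "A c"] A[OF c] by simp
    qed
    also have "\<dots> = (\<Prod>c\<in>I. emeasure (shifted b (a c)) (A c))"
      using A by (intro prod.cong refl shift_emeasure) auto
    finally show "emeasure (distr (PiM I (\<lambda>_. laplace_measure b)) (PiM I (\<lambda>_. borel)) (\<lambda>\<eta>. \<lambda>c\<in>I. a c + \<eta> c)) (PiE I A)
       = (\<Prod>c\<in>I. emeasure (shifted b (a c)) (A c))" .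
  qed
qed


lemma g_meas:
  "(\<lambda>x. \<Prod>c\<in>I. ennreal (laplace_density b (x c - a c))) \<in> borel_measurable (PiM I (\<lambda>_. lborel))"
proof (rule borel_measurable_prod_ennreal)
  fix c assume c: "c \<in> I"
  have "(\<lambda>x. x c) \<in> measurable (PiM I (\<lambda>_. lborel)) (lborel :: real measure)"
    using c by (rule measurable_component_singleton)
  have "(\<lambda>x. x c) \<in> borel_measurable (PiM I (\<lambda>_. lborel))"
    using c by measurable
  then show "(\<lambda>x. ennreal (laplace_density b (x c - a c))) \<in> borel_measurable (PiM I (\<lambda>_. lborel))"
    unfolding laplace_density_def by measurable
qed

lemma PiM_shifted_density:
  fixes I :: "'i set" and a :: "'i \<Rightarrow> real"
  assumes I: "finite I" and b: "b > 0"
  shows "PiM I (\<lambda>c. shifted b (a c))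
       = density (PiM I (\<lambda>_. lborel)) (\<lambda>x. \<Prod>c\<in>I. ennreal (laplace_density b (x c - a c)))"
proof -
  interpret S: product_prob_space "\<lambda>c. shifted b (a c)"
    by (rule product_prob_spaceI) (rule prob_shifted[OF b])
  interpret B: product_sigma_finite "\<lambda>_. lborel :: real measure"
    by (simp add: product_sigma_finite_def lborel.sigma_finite_measure_axioms)
  show ?thesis
  proof (rule S.PiM_eqI[OF I, symmetric])
    show "sets (density (PiM I (\<lambda>_. lborel)) (\<lambda>x. \<Prod>c\<in>I. ennreal (laplace_density b (x c - a c))))
       = sets (PiM I (\<lambda>c. shifted b (a c)))"
      unfolding sets_density by (intro sets_PiM_cong) auto
    fix A assume A: "\<And>i. i \<in> I \<Longrightarrow> A i \<in> sets (shifted b (a i))"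
    have AS: "PiE I A \<in> sets (PiM I (\<lambda>_. lborel))"
      using A by (intro sets_PiM_I_finite[OF I]) auto
    have "emeasure (density (PiM I (\<lambda>_. lborel)) (\<lambda>x. \<Prod>c\<in>I. ennreal (laplace_density b (x c - a c)))) (PiE I A)
      = (\<integral>\<^sup>+x. (\<Prod>c\<in>I. ennreal (laplace_density b (x c - a c))) * indicator (PiE I A) x \<partial>PiM I (\<lambda>_. lborel))"
      by (rule emeasure_density[OF g_meas AS])
    also have "\<dots> = (\<integral>\<^sup>+x. (\<Prod>c\<in>I. ennreal (laplace_density b (x c - a c)) * indicator (A c) (x c)) \<partial>PiM I (\<lambda>_. lborel))"
    proof (rule nn_integral_cong)
      fix x assume x: "x \<in> space (PiM I (\<lambda>_. lborel :: real measure))"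
      have "indicator (PiE I A) x = (\<Prod>c\<in>I. indicator (A c) (x c) :: ennreal)"
      proof (cases "\<forall>c\<in>I. x c \<in> A c")
        case True
        then have "x \<in> PiE I A" using x by (auto simp: space_PiM PiE_iff)
        then show ?thesis using True by simp
      next
        case False
        then obtain c where c: "c \<in> I" "x c \<notin> A c" by auto
        then have "x \<notin> PiE I A" by (auto simp: PiE_iff)
        moreover have "(\<Prod>c\<in>I. indicator (A c) (x c) :: ennreal) = 0"
          by (rule prod_zero[OF I bexI[of _ c]]) (use c in auto)
        ultimately show ?thesis by simp
      qed
      then show "(\<Prod>c\<in>I. ennreal (laplace_density b (x c - a c))) * indicator (PiE I A) x
          = (\<Prod>c\<in>I. ennreal (laplace_density b (x c - a c)) * indicator (A c) (x c))"
        by (simp add: prod.distrib)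
    qed
    also have "\<dots> = (\<Prod>c\<in>I. (\<integral>\<^sup>+y. ennreal (laplace_density b (y - a c)) * indicator (A c) y \<partial>lborel))"
    proof (rule B.product_nn_integral_prod[OF I])
      fix c assume c: "c \<in> I"
      have [measurable]: "A c \<in> sets borel" using A[OF c] by simp
      show "(\<lambda>y. ennreal (laplace_density b (y - a c)) * indicator (A c) y) \<in> borel_measurable lborel"
        unfolding laplace_density_def by measurable
    qed
    also have "\<dots> = (\<Prod>c\<in>I. emeasure (shifted b (a c)) (A c))"
    proof (rule prod.cong[OF refl])
      fix c assume c: "c \<in> I"
      have [measurable]: "A c \<in> sets borel" using A[OF c] by simp
      show "(\<integral>\<^sup>+y. ennreal (laplace_density b (y - a c)) * indicator (A c) y \<partial>lborel) = emeasure (shifted b (a c)) (A c)"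
        unfolding shifted_def by (subst emeasure_density) (auto simp: laplace_density_def)
    qed
    finally show "emeasure (density (PiM I (\<lambda>_. lborel)) (\<lambda>x. \<Prod>c\<in>I. ennreal (laplace_density b (x c - a c)))) (PiE I A)
      = (\<Prod>c\<in>I. emeasure (shifted b (a c)) (A c))" .
  qed
qed


lemma shift_meas:
  "(\<lambda>\<eta>. \<lambda>c\<in>I. a c + \<eta> c) \<in> measurable (PiM I (\<lambda>_. laplace_measure b)) (PiM I (\<lambda>_. borel))"
proof (rule measurable_restrict)
  fix c assume "c \<in> I"
  then have "(\<lambda>\<eta>. \<eta> c) \<in> borel_measurable (PiM I (\<lambda>_. laplace_measure b))"
    unfolding laplace_measure_def by measurable
  then show "(\<lambda>\<eta>. a c + \<eta> c) \<in> borel_measurable (PiM I (\<lambda>_. laplace_measure b))"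
    by (intro borel_measurable_add) auto
qed

lemma alg_emeasure:
  fixes I :: "'i set" and a :: "'i \<Rightarrow> real" and sel :: "('i \<Rightarrow> real) \<Rightarrow> 'o::topological_space"
  assumes I: "finite I" and b: "b > 0"
    and sel: "sel \<in> measurable (PiM I (\<lambda>_. borel)) borel" and Y: "Y \<in> sets borel"
  shows "emeasure (distr (PiM I (\<lambda>_. laplace_measure b)) borel (\<lambda>\<eta>. sel (\<lambda>c\<in>I. a c + \<eta> c))) Y
    = (\<integral>\<^sup>+x. (\<Prod>c\<in>I. ennreal (laplace_density b (x c - a c))) * indicator (sel -` Y \<inter> space (PiM I (\<lambda>_. borel))) x \<partial>PiM I (\<lambda>_. lborel))"
proof -
  let ?g = "\<lambda>x. \<Prod>c\<in>I. ennreal (laplace_density b (x c - a c))"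
  have "distr (PiM I (\<lambda>_. laplace_measure b)) borel (\<lambda>\<eta>. sel (\<lambda>c\<in>I. a c + \<eta> c))
      = distr (distr (PiM I (\<lambda>_. laplace_measure b)) (PiM I (\<lambda>_. borel)) (\<lambda>\<eta>. \<lambda>c\<in>I. a c + \<eta> c)) borel sel"
    by (subst distr_distr[OF sel shift_meas]) (simp add: comp_def)
  also have "\<dots> = distr (density (PiM I (\<lambda>_. lborel)) ?g) borel sel"
    by (simp only: distr_shift_PiM[OF I b] PiM_shifted_density[OF I b])
  finally have eq: "distr (PiM I (\<lambda>_. laplace_measure b)) borel (\<lambda>\<eta>. sel (\<lambda>c\<in>I. a c + \<eta> c))
      = distr (density (PiM I (\<lambda>_. lborel)) ?g) borel sel" .
  have setsD: "sets (density (PiM I (\<lambda>_. lborel)) ?g) = sets (PiM I (\<lambda>_. borel))"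
    unfolding sets_density by (intro sets_PiM_cong) auto
  have spD: "space (density (PiM I (\<lambda>_. lborel)) ?g) = space (PiM I (\<lambda>_. borel))"
    using sets_eq_imp_space_eq[OF setsD] .
  have sel': "sel \<in> measurable (density (PiM I (\<lambda>_. lborel)) ?g) borel"
    using sel measurable_cong_sets[OF setsD refl] by simp
  have S: "sel -` Y \<inter> space (PiM I (\<lambda>_. borel)) \<in> sets (PiM I (\<lambda>_. lborel))"
    using measurable_sets[OF sel Y] sets_PiM_cong[of I I "\<lambda>_. borel :: real measure" "\<lambda>_. lborel :: real measure"] by simp
  show ?thesis
    unfolding eq
    apply (subst emeasure_distr[OF sel' Y])
    apply (subst spD)
    apply (rule emeasure_density[OF g_meas S])
    done
qed

lemma lap_shift_le:
  assumes b: "b > 0"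
  shows "laplace_density b (y - a) \<le> exp (\<bar>a - a'\<bar> / b) * laplace_density b (y - a')"
proof -
  have "- \<bar>y - a\<bar> / b \<le> \<bar>a - a'\<bar> / b + - \<bar>y - a'\<bar> / b"
    using b by (simp add: divide_le_eq field_simps)
  then have "exp (- \<bar>y - a\<bar> / b) \<le> exp (\<bar>a - a'\<bar> / b) * exp (- \<bar>y - a'\<bar> / b)"
    by (simp add: exp_add[symmetric])
  then show ?thesis
    using b unfolding laplace_density_def by (simp add: divide_right_mono mult.assoc[symmetric] del: exp_le_cancel_iff)
qed

lemma dens_ratio:
  fixes I :: "'i set" and a a' :: "'i \<Rightarrow> real"
  assumes I: "finite I" and b: "b > 0" and sens: "(\<Sum>c\<in>I. \<bar>a c - a' c\<bar>) \<le> b * eps"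
  shows "(\<Prod>c\<in>I. laplace_density b (x c - a c)) \<le> exp eps * (\<Prod>c\<in>I. laplace_density b (x c - a' c))"
proof -
  have "(\<Prod>c\<in>I. laplace_density b (x c - a c)) \<le> (\<Prod>c\<in>I. exp (\<bar>a c - a' c\<bar> / b) * laplace_density b (x c - a' c))"
    by (intro prod_mono conjI lap_nonneg[OF b] lap_shift_le[OF b])
  also have "\<dots> = exp (\<Sum>c\<in>I. \<bar>a c - a' c\<bar> / b) * (\<Prod>c\<in>I. laplace_density b (x c - a' c))"
    by (simp add: prod.distrib exp_sum[OF I])
  also have "\<dots> \<le> exp eps * (\<Prod>c\<in>I. laplace_density b (x c - a' c))"
  proof (rule mult_right_mono)
    have "(\<Sum>c\<in>I. \<bar>a c - a' c\<bar> / b) = (\<Sum>c\<in>I. \<bar>a c - a' c\<bar>) / b"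
      by (simp add: sum_divide_distrib)
    also have "\<dots> \<le> eps" using sens b by (simp add: divide_le_eq mult.commute)
    finally show "exp (\<Sum>c\<in>I. \<bar>a c - a' c\<bar> / b) \<le> exp eps" by simp
    show "0 \<le> (\<Prod>c\<in>I. laplace_density b (x c - a' c))"
      by (intro prod_nonneg lap_nonneg[OF b])
  qed
  finally show ?thesis .
qed

lemma dp_core:
  fixes I :: "'i set" and a a' :: "'i \<Rightarrow> real" and sel :: "('i \<Rightarrow> real) \<Rightarrow> 'o::topological_space"
  assumes I: "finite I" and b: "b > 0" and sens: "(\<Sum>c\<in>I. \<bar>a c - a' c\<bar>) \<le> b * eps"
    and sel: "sel \<in> measurable (PiM I (\<lambda>_. borel)) borel" and Y: "Y \<in> sets borel"
  shows "emeasure (distr (PiM I (\<lambda>_. laplace_measure b)) borel (\<lambda>\<eta>. sel (\<lambda>c\<in>I. a c + \<eta> c))) Y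
    \<le> ennreal (exp eps) * emeasure (distr (PiM I (\<lambda>_. laplace_measure b)) borel (\<lambda>\<eta>. sel (\<lambda>c\<in>I. a' c + \<eta> c))) Y"
proof -
  let ?S = "sel -` Y \<inter> space (PiM I (\<lambda>_. borel))"
  have "(\<integral>\<^sup>+x. (\<Prod>c\<in>I. ennreal (laplace_density b (x c - a c))) * indicator ?S x \<partial>PiM I (\<lambda>_. lborel))
     \<le> (\<integral>\<^sup>+x. ennreal (exp eps) * ((\<Prod>c\<in>I. ennreal (laplace_density b (x c - a' c))) * indicator ?S x) \<partial>PiM I (\<lambda>_. lborel))"
  proof (rule nn_integral_mono)
    fix x
    have "(\<Prod>c\<in>I. ennreal (laplace_density b (x c - a c))) = ennreal (\<Prod>c\<in>I. laplace_density b (x c - a c))"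
      by (rule prod_ennreal) (rule lap_nonneg[OF b])
    also have "\<dots> \<le> ennreal (exp eps * (\<Prod>c\<in>I. laplace_density b (x c - a' c)))"
      by (rule ennreal_leI) (rule dens_ratio[OF I b sens])
    also have "\<dots> = ennreal (exp eps) * (\<Prod>c\<in>I. ennreal (laplace_density b (x c - a' c)))"
      by (simp add: ennreal_mult prod_ennreal lap_nonneg[OF b] prod_nonneg)
    finally show "(\<Prod>c\<in>I. ennreal (laplace_density b (x c - a c))) * indicator ?S x
       \<le> ennreal (exp eps) * ((\<Prod>c\<in>I. ennreal (laplace_density b (x c - a' c))) * indicator ?S x)"
      by (simp add: mult.assoc[symmetric] mult_right_mono)
  qed
  also have "\<dots> = ennreal (exp eps) * (\<integral>\<^sup>+x. (\<Prod>c\<in>I. ennreal (laplace_density b (x c - a' c))) * indicator ?S x \<partial>PiM I (\<lambda>_. lborel))"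
  proof (rule nn_integral_cmult)
    have S: "?S \<in> sets (PiM I (\<lambda>_. lborel))"
      using measurable_sets[OF sel Y] sets_PiM_cong[of I I "\<lambda>_. borel :: real measure" "\<lambda>_. lborel :: real measure"] by simp
    show "(\<lambda>x. (\<Prod>c\<in>I. ennreal (laplace_density b (x c - a' c))) * indicator ?S x) \<in> borel_measurable (PiM I (\<lambda>_. lborel))"
      using g_meas S by (intro borel_measurable_times_ennreal) auto
  qed
  finally show ?thesis
    by (simp only: alg_emeasure[OF I b sel Y])
qed



lemma l1_sq_le: "(\<Sum>k\<in>UNIV. \<bar>V $ k\<bar>)\<^sup>2 \<le> real CARD('d::finite) * (norm (V :: real^'d))\<^sup>2"
proof -
  have n: "(norm V)\<^sup>2 = (\<Sum>k\<in>UNIV. \<bar>V $ k\<bar>\<^sup>2)"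
    unfolding norm_vec_def L2_set_def by (simp add: sum_nonneg)
  show ?thesis
    using sum_squared_le_sum_of_squares[of "\<lambda>k. \<bar>V $ k\<bar>" UNIV] unfolding n by (simp add: mult.commute)
qed

definition ev :: "'d \<Rightarrow> 'd \<Rightarrow> nat" where "ev j = (\<lambda>i. if i = j then 1 else 0)"

lemma sum_ev: "(\<Sum>k\<in>(UNIV::'d::finite set). ev j k) = 1"
  unfolding ev_def by simp

lemma Psi1_eq: "Psi 1 = range (ev :: 'd::finite \<Rightarrow> _)"
proof
  show "range ev \<subseteq> (Psi 1 :: ('d \<Rightarrow> nat) set)" by (auto simp: Psi_def sum_ev)
  show "(Psi 1 :: ('d \<Rightarrow> nat) set) \<subseteq> range ev"
  proof
    fix c :: "'d \<Rightarrow> nat" assume "c \<in> Psi 1"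
    then have s: "(\<Sum>k\<in>UNIV. c k) = 1" by (simp add: Psi_def)
    then obtain j where j: "c j \<noteq> 0" by (metis (full_types) sum.neutral zero_neq_one)
    have split: "(\<Sum>k\<in>UNIV. c k) = c j + (\<Sum>k\<in>UNIV-{j}. c k)"
      by (simp add: sum.remove)
    then have "c j = 1" "(\<Sum>k\<in>UNIV-{j}. c k) = 0" using s j by linarith+
    then have "c = ev j" unfolding ev_def by (auto simp: fun_eq_iff)
    then show "c \<in> range ev" by simp
  qed
qed

lemma inj_ev: "inj ev"
  unfolding inj_def ev_def fun_eq_iff by (metis one_neq_zero)

lemma coef_ev: "coef V (ev j) = sqrt (2/pi) * V $ j"
proof -
  have "(\<Prod>k\<in>UNIV. fact (ev j k) :: real) = 1"
    by (rule prod.neutral) (simp add: ev_def)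
  moreover have "(\<Prod>k\<in>UNIV. (V $ k) ^ ev j k) = V $ j"
  proof -
    have "(\<Prod>k\<in>UNIV. (V $ k) ^ ev j k) = (V $ j) ^ ev j j * (\<Prod>k\<in>UNIV-{j}. (V $ k) ^ ev j k)"
      by (simp add: prod.remove)
    also have "(\<Prod>k\<in>UNIV-{j}. (V $ k) ^ ev j k) = 1"
      by (rule prod.neutral) (simp add: ev_def)
    finally show ?thesis by (simp add: ev_def)
  qed
  ultimately show ?thesis unfolding coef_def Let_def sum_ev by (simp add: taylor_coeff_def)
qed

lemma sum_Psi1: "(\<Sum>c\<in>Psi 1. \<bar>coef V c\<bar>) = sqrt (2/pi) * (\<Sum>k\<in>UNIV. \<bar>V $ k\<bar>)"
  unfolding Psi1_eq by (simp add: sum.reindex[OF inj_ev] coef_ev abs_mult sum_distrib_left)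


lemma prod_ev: "(\<Prod>k\<in>(UNIV::'d::finite set). (g k :: real) ^ ev j k) = g j"
proof -
  have "(\<Prod>k\<in>UNIV. g k ^ ev j k) = g j ^ ev j j * (\<Prod>k\<in>UNIV-{j}. g k ^ ev j k)"
    by (simp add: prod.remove)
  also have "(\<Prod>k\<in>UNIV-{j}. g k ^ ev j k) = 1"
    by (rule prod.neutral) (simp add: ev_def)
  finally show ?thesis by (simp add: ev_def)
qed

definition fpair :: "'d \<times> 'd \<Rightarrow> 'd \<Rightarrow> nat" where
  "fpair p = (\<lambda>i. ev (fst p) i + ev (snd p) i)"

lemma finite_Psi: "finite (Psi w :: ('d::finite \<Rightarrow> nat) set)"
proof -
  have "Psi w \<subseteq> PiE (UNIV::'d set) (\<lambda>_. {..w})"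
  proof
    fix c :: "'d \<Rightarrow> nat" assume "c \<in> Psi w"
    then have "\<forall>k. c k \<le> w" unfolding Psi_def
      using member_le_sum[of _ UNIV c] by fastforce
    then show "c \<in> PiE UNIV (\<lambda>_. {..w})" by (simp add: PiE_UNIV_domain)
  qed
  moreover have "finite (PiE (UNIV::'d set) (\<lambda>_. {..w}))" by (intro finite_PiE) auto
  ultimately show ?thesis by (rule finite_subset)
qed

lemma fpair_Psi2: "fpair p \<in> Psi 2"
  unfolding Psi_def fpair_def by (simp add: sum.distrib sum_ev)

lemma fiber_card:
  assumes c: "c \<in> (Psi 2 :: ('d::finite \<Rightarrow> nat) set)"
  shows "real (card {p. fpair p = c}) * (\<Prod>k\<in>UNIV. fact (c k)) = 2"
proof -
  have s: "(\<Sum>k\<in>UNIV. c k) = 2" using c by (simp add: Psi_def)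
  have le: "c k \<le> 2" for k using member_le_sum[of k UNIV c] s by simp
  have pos: "fpair (p, q) p \<ge> 1" "fpair (p, q) q \<ge> 1" for p q by (auto simp: fpair_def ev_def)
  show ?thesis
  proof (cases "\<exists>k. c k = 2")
    case True
    then obtain k where k: "c k = 2" by auto
    have rest: "(\<Sum>i\<in>UNIV-{k}. c i) = 0"
      using s k sum.remove[of UNIV k c] by simp
    then have z: "c i = 0" if "i \<noteq> k" for i using that by simp
    have fib: "{p. fpair p = c} = {(k, k)}"
    proof (intro set_eqI iffI)
      fix x assume "x \<in> {p. fpair p = c}"
      then obtain p q where x: "x = (p, q)" and e: "fpair (p, q) = c" by (cases x) auto
      have "p = k" using pos(1)[of p q] e z by (metis not_one_le_zero)
      moreover have "q = k" using pos(2)[of p q] e z by (metis not_one_le_zero)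
      ultimately show "x \<in> {(k, k)}" using x by auto
    next
      fix x assume "x \<in> {(k, k)}"
      then show "x \<in> {p. fpair p = c}" using k z by (auto simp: fpair_def ev_def fun_eq_iff)
    qed
    have "(\<Prod>i\<in>UNIV. fact (c i) :: real) = fact (c k) * (\<Prod>i\<in>UNIV-{k}. fact (c i))"
      by (simp add: prod.remove)
    also have "(\<Prod>i\<in>UNIV-{k}. fact (c i) :: real) = 1" by (rule prod.neutral) (simp add: z)
    finally show ?thesis using k fib by simp
  next
    case False
    have le1: "c k \<le> 1" for k
    proof -
      have "c k \<noteq> 2" using False by auto
      then show ?thesis using le[of k] by linarith
    qed
    have "(\<Sum>k\<in>UNIV. c k) = (\<Sum>k\<in>UNIV. if c k = 1 then 1 else 0)"
    proof (intro sum.cong refl)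
      fix k show "c k = (if c k = 1 then 1 else 0)" using le1[of k] by (cases "c k = 1") auto
    qed
    also have "\<dots> = card {k. c k = 1}" by (simp add: sum.If_cases)
    finally have "card {k. c k = 1} = 2" using s by simp
    then obtain j l where jl: "j \<noteq> l" "{k. c k = 1} = {j, l}" by (auto simp: card_2_iff)
    have cj: "c i = (if i = j \<or> i = l then 1 else 0)" for i
    proof -
      have "c i = 1 \<longleftrightarrow> i = j \<or> i = l" using jl(2) by (auto simp: set_eq_iff)
      then show ?thesis using le1[of i] by (cases "c i = 1") auto
    qed
    have fib: "{p. fpair p = c} = {(j, l), (l, j)}"
    proof (intro set_eqI iffI)
      fix x assume "x \<in> {p. fpair p = c}"
      then obtain p q where x: "x = (p, q)" and e: "fpair (p, q) = c" by (cases x) auto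
      have p: "p = j \<or> p = l" using pos(1)[of p q] e cj[of p] by (auto split: if_splits)
      have q: "q = j \<or> q = l" using pos(2)[of p q] e cj[of q] by (auto split: if_splits)
      have "p \<noteq> q"
      proof
        assume "p = q"
        then have "fpair (p, q) p = 2" by (simp add: fpair_def ev_def)
        then show False using e le1[of p] by simp
      qed
      then show "x \<in> {(j, l), (l, j)}" using p q x by auto
    next
      fix x assume "x \<in> {(j, l), (l, j)}"
      then show "x \<in> {p. fpair p = c}" using jl(1) cj by (auto simp: fpair_def ev_def fun_eq_iff)
    qed
    have "(\<Prod>i\<in>UNIV. fact (c i) :: real) = 1"
      by (rule prod.neutral) (simp add: cj)
    then show ?thesis using fib jl(1) by simp
  qed
qed

lemma coef_Psi2:
  assumes "c \<in> Psi 2"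
  shows "\<bar>coef V c\<bar> = 1/pi * (real (card {p. fpair p = c}) * (\<Prod>k\<in>UNIV. \<bar>V $ k\<bar> ^ c k))"
proof -
  have s: "(\<Sum>k\<in>UNIV. c k) = 2" using assms by (simp add: Psi_def)
  have pf: "(\<Prod>k\<in>UNIV. fact (c k) :: real) > 0" by (intro prod_pos) auto
  have card: "real (card {p. fpair p = c}) = 2 / (\<Prod>k\<in>UNIV. fact (c k))"
    using fiber_card[OF assms] pf by (simp add: field_simps)
  show ?thesis
    unfolding coef_def Let_def s card
    by (simp add: taylor_coeff_def abs_mult abs_prod power_abs pf)
qed

lemma sum_Psi2: "(\<Sum>c\<in>Psi 2. \<bar>coef V c\<bar>) = 1/pi * (\<Sum>k\<in>UNIV. \<bar>V $ k\<bar>)\<^sup>2"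
proof -
  let ?G = "\<lambda>c. (\<Prod>k\<in>UNIV. \<bar>V $ k\<bar> ^ c k)"
  have "(\<Sum>c\<in>Psi 2. \<bar>coef V c\<bar>) = 1/pi * (\<Sum>c\<in>Psi 2. real (card {p. fpair p = c}) * ?G c)"
    by (simp add: coef_Psi2 sum_distrib_left)
  also have "(\<Sum>c\<in>Psi 2. real (card {p. fpair p = c}) * ?G c) = (\<Sum>c\<in>Psi 2. \<Sum>p\<in>{p\<in>UNIV. fpair p = c}. ?G (fpair p))"
    by (intro sum.cong refl) simp
  also have "\<dots> = (\<Sum>p\<in>UNIV. ?G (fpair p))"
    by (rule sum.group) (auto simp: finite_Psi fpair_Psi2)
  also have "\<dots> = (\<Sum>p\<in>UNIV. \<bar>V $ fst p\<bar> * \<bar>V $ snd p\<bar>)"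
    by (intro sum.cong refl) (simp add: fpair_def power_add prod.distrib prod_ev)
  also have "\<dots> = (\<Sum>k\<in>UNIV. \<bar>V $ k\<bar>)\<^sup>2"
    by (simp add: power2_eq_square sum_product UNIV_Times_UNIV[symmetric] sum.cartesian_product case_prod_beta del: UNIV_Times_UNIV)
  finally show ?thesis .
qed


lemma Psi0_coef: "c \<in> Psi 0 \<Longrightarrow> coef V c = ln (1/2)"
proof -
  assume "c \<in> Psi 0"
  then have z: "c k = 0" for k by (simp add: Psi_def)
  show ?thesis unfolding coef_def Let_def by (simp add: z taylor_coeff_def)
qed

lemma l1_le_sqrt: "norm (V :: real^'d::finite) \<le> 1 \<Longrightarrow> (\<Sum>k\<in>UNIV. \<bar>V $ k\<bar>) \<le> sqrt (real CARD('d))"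
proof -
  assume n: "norm V \<le> 1"
  have "(norm V)\<^sup>2 \<le> 1" using n by (simp add: power_le_one)
  then have "(\<Sum>k\<in>UNIV. \<bar>V $ k\<bar>)\<^sup>2 \<le> real CARD('d)"
    using l1_sq_le[of V] by (meson dual_order.trans mult_left_le of_nat_0_le_iff)
  then show ?thesis by (rule real_le_rsqrt)
qed

lemma sum_Psi1_le: "norm (V :: real^'d::finite) \<le> 1 \<Longrightarrow> (\<Sum>c\<in>Psi 1. \<bar>coef V c\<bar>) \<le> sqrt (2 * real CARD('d) / pi)"
proof -
  assume n: "norm V \<le> 1"
  have "(\<Sum>c\<in>Psi 1. \<bar>coef V c\<bar>) \<le> sqrt (2/pi) * sqrt (real CARD('d))"
    unfolding sum_Psi1 using l1_le_sqrt[OF n] by (intro mult_left_mono) auto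
  also have "\<dots> = sqrt (2 * real CARD('d) / pi)" by (simp add: real_sqrt_mult[symmetric])
  finally show ?thesis .
qed

lemma sum_Psi2_le: "norm (V :: real^'d::finite) \<le> 1 \<Longrightarrow> (\<Sum>c\<in>Psi 2. \<bar>coef V c\<bar>) \<le> real CARD('d) / pi"
proof -
  assume n: "norm V \<le> 1"
  have "(norm V)\<^sup>2 \<le> 1" using n by (simp add: power_le_one)
  then have "(\<Sum>k\<in>UNIV. \<bar>V $ k\<bar>)\<^sup>2 \<le> real CARD('d)"
    using l1_sq_le[of V] by (meson dual_order.trans mult_left_le of_nat_0_le_iff)
  then show ?thesis unfolding sum_Psi2 by (simp add: divide_right_mono)
qed

lemma finite_Psi_all: "finite (Psi_all :: ('d::finite \<Rightarrow> nat) set)"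
  unfolding Psi_all_def by (simp add: finite_Psi)

lemma sensitivity:
  fixes V V' :: "real^'d::finite"
  assumes "norm V \<le> 1" "norm V' \<le> 1"
  shows "(\<Sum>c\<in>Psi_all. \<bar>coef V c - coef V' c\<bar>) \<le> Delta_upper CARD('d)"
proof -
  have d01: "Psi 0 \<inter> Psi 1 = ({} :: ('d \<Rightarrow> nat) set)" "(Psi 0 \<union> Psi 1) \<inter> Psi 2 = ({} :: ('d \<Rightarrow> nat) set)"
    by (auto simp: Psi_def)
  have "(\<Sum>c\<in>Psi_all. \<bar>coef V c - coef V' c\<bar>)
      = (\<Sum>c\<in>Psi 0. \<bar>coef V c - coef V' c\<bar>) + (\<Sum>c\<in>Psi 1. \<bar>coef V c - coef V' c\<bar>) + (\<Sum>c\<in>Psi 2. \<bar>coef V c - coef V' c\<bar>)"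
    unfolding Psi_all_def
    using sum.union_disjoint[OF finite_UnI[OF finite_Psi finite_Psi] finite_Psi d01(2), of "\<lambda>c. \<bar>coef V c - coef V' c\<bar>"]
      sum.union_disjoint[OF finite_Psi finite_Psi d01(1), of "\<lambda>c. \<bar>coef V c - coef V' c\<bar>"]
    by simp
  also have "(\<Sum>c\<in>Psi 0. \<bar>coef V c - coef V' c\<bar>) = 0" by (simp add: Psi0_coef)
  also have "(\<Sum>c\<in>Psi 1. \<bar>coef V c - coef V' c\<bar>) \<le> (\<Sum>c\<in>Psi 1. \<bar>coef V c\<bar>) + (\<Sum>c\<in>Psi 1. \<bar>coef V' c\<bar>)"
    by (simp add: sum.distrib[symmetric] sum_mono abs_triangle_ineq4)
  also have "(\<Sum>c\<in>Psi 2. \<bar>coef V c - coef V' c\<bar>) \<le> (\<Sum>c\<in>Psi 2. \<bar>coef V c\<bar>) + (\<Sum>c\<in>Psi 2. \<bar>coef V' c\<bar>)"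
    by (simp add: sum.distrib[symmetric] sum_mono abs_triangle_ineq4)
  finally show ?thesis
    using sum_Psi1_le[OF assms(1)] sum_Psi1_le[OF assms(2)] sum_Psi2_le[OF assms(1)] sum_Psi2_le[OF assms(2)]
    unfolding Delta_upper_def by linarith
qed



theorem theorem5:
  fixes eps :: real and n :: nat
    and D D' :: "nat \<Rightarrow> (real^'d::finite) \<times> (real^'d)"
    and sel :: "(('d \<Rightarrow> nat) \<Rightarrow> real) \<Rightarrow> real^'d"
    and Y :: "(real^'d) set"
  assumes "n \<ge> 1" and "eps > 0"
    and "\<And>j. j < n \<Longrightarrow> norm (fst (D j)) \<le> 1/2 \<and> norm (snd (D j)) \<le> 1/2"
    and "\<And>j. j < n \<Longrightarrow> norm (fst (D' j)) \<le> 1/2 \<and> norm (snd (D' j)) \<le> 1/2"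
    and "\<exists>k<n. D k \<noteq> D' k \<and> (\<forall>j<n. j \<noteq> k \<longrightarrow> D j = D' j)"
    and "sel \<in> measurable (PiM Psi_all (\<lambda>_. borel)) borel"
    and "\<And>lam. (\<exists>\<beta>. \<forall>\<beta>'. noisy_objective lam \<beta>' \<le> noisy_objective lam \<beta>) \<Longrightarrow>
           (\<forall>\<beta>'. noisy_objective lam \<beta>' \<le> noisy_objective lam (sel lam))"
    and "Y \<in> sets borel"
  shows "measure (algorithm3 eps n D sel) Y \<le> exp eps * measure (algorithm3 eps n D' sel) Y"
proof -
  note eps = assms(2) and sel = assms(6) and Y = assms(8)
  obtain k where k: "k < n" "\<forall>j<n. j \<noteq> k \<longrightarrow> D j = D' j" using assms(5) by auto
  define V where "V = (\<lambda>j. fst (D j) - snd (D j))"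
  define V' where "V' = (\<lambda>j. fst (D' j) - snd (D' j))"
  define a where "a = (\<lambda>c. \<Sum>j<n. coef (V j) c)"
  define a' where "a' = (\<lambda>c. \<Sum>j<n. coef (V' j) c)"
  define b where "b = Delta_upper CARD('d) / eps"
  have nV: "norm (V k) \<le> 1"
  proof -
    have "norm (V k) \<le> norm (fst (D k)) + norm (snd (D k))" unfolding V_def by (rule norm_triangle_ineq4)
    then show ?thesis using assms(3)[OF k(1)] by linarith
  qed
  have nV': "norm (V' k) \<le> 1"
  proof -
    have "norm (V' k) \<le> norm (fst (D' k)) + norm (snd (D' k))" unfolding V'_def by (rule norm_triangle_ineq4)
    then show ?thesis using assms(4)[OF k(1)] by linarith
  qed
  have diff: "a c - a' c = coef (V k) c - coef (V' k) c" for c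
  proof -
    have "a c = coef (V k) c + (\<Sum>j\<in>{..<n}-{k}. coef (V j) c)"
      unfolding a_def using k(1) by (simp add: sum.remove)
    moreover have "a' c = coef (V' k) c + (\<Sum>j\<in>{..<n}-{k}. coef (V' j) c)"
      unfolding a'_def using k(1) by (simp add: sum.remove)
    moreover have "(\<Sum>j\<in>{..<n}-{k}. coef (V j) c) = (\<Sum>j\<in>{..<n}-{k}. coef (V' j) c)"
      using k(2) unfolding V_def V'_def by (intro sum.cong refl) auto
    ultimately show ?thesis by simp
  qed
  have Dpos: "Delta_upper CARD('d) > 0"
    unfolding Delta_upper_def by (intro add_pos_pos) auto
  have b: "b > 0" unfolding b_def using Dpos eps by simp
  have sens: "(\<Sum>c\<in>Psi_all. \<bar>a c - a' c\<bar>) \<le> b * eps"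
    unfolding diff b_def using sensitivity[OF nV nV'] eps by simp
  have core: "emeasure (distr (PiM Psi_all (\<lambda>_. laplace_measure b)) borel (\<lambda>\<eta>. sel (\<lambda>c\<in>Psi_all. a c + \<eta> c))) Y
    \<le> ennreal (exp eps) * emeasure (distr (PiM Psi_all (\<lambda>_. laplace_measure b)) borel (\<lambda>\<eta>. sel (\<lambda>c\<in>Psi_all. a' c + \<eta> c))) Y"
    by (rule dp_core[OF finite_Psi_all b sens sel Y])
  have alg: "algorithm3 eps n D sel = distr (PiM Psi_all (\<lambda>_. laplace_measure b)) borel (\<lambda>\<eta>. sel (\<lambda>c\<in>Psi_all. a c + \<eta> c))"
    "algorithm3 eps n D' sel = distr (PiM Psi_all (\<lambda>_. laplace_measure b)) borel (\<lambda>\<eta>. sel (\<lambda>c\<in>Psi_all. a' c + \<eta> c))"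
    unfolding algorithm3_def a_def a'_def b_def V_def V'_def by simp_all
  have ps: "prob_space (distr (PiM Psi_all (\<lambda>_. laplace_measure b)) borel (\<lambda>\<eta>. sel (\<lambda>c\<in>Psi_all. a c + \<eta> c)))"
    for a :: "('d \<Rightarrow> nat) \<Rightarrow> real"
  proof -
    interpret P: prob_space "PiM Psi_all (\<lambda>_. laplace_measure b)"
      by (rule prob_space_PiM) (rule prob_laplace[OF b])
    have "(\<lambda>\<eta>. sel (\<lambda>c\<in>Psi_all. a c + \<eta> c)) \<in> measurable (PiM Psi_all (\<lambda>_. laplace_measure b)) borel"
      using measurable_comp[OF shift_meas sel] by (simp add: comp_def)
    then show ?thesis by (rule P.prob_space_distr)
  qed
  have "ennreal (measure (algorithm3 eps n D sel) Y) \<le> ennreal (exp eps) * ennreal (measure (algorithm3 eps n D' sel) Y)"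
    using core unfolding alg
    by (simp add: finite_measure.emeasure_eq_measure[OF prob_space.axioms(1)[OF ps]])
  also have "\<dots> = ennreal (exp eps * measure (algorithm3 eps n D' sel) Y)"
    by (simp add: ennreal_mult)
  finally show ?thesis
    by (subst (asm) ennreal_le_iff) auto
qed

end
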